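(* Let $n=3$, $I_1=\{1,2\}$, $I_2=\{2,3\}$, $f=x_1x_2+x_2^2x_3$, $g_1=x_2^3$, $g_2=-x_2^3$, $g_3=x_3$, and $S(g)=\{x\in\mathbb R^3: g_1(x)\ge0,g_2(x)\ge0,g_3(x)\ge0\}$ (so $f=0$ on $S(g)$). Let $\theta_1=1+x_1^2+x_2^2$, $\theta_2=1+x_2^2+x_3^2$, $\Theta_1=\theta_1(1+x_2^2)$, $\Theta_2=\theta_2(1+x_2^2)$. Then: (1) $f$ cannot be written as $\sigma_1+\psi_1g_1+\sigma_2+\sigma_3g_3$ with $\sigma_1\in\Sigma[x(I_1)]$, $\psi_1\in\mathbb R[x(I_1)]$, $\sigma_2,\sigma_3\in\Sigma[x(I_2)]$; (2) for every $\varepsilon>0$ there exist $k\in\mathbb N$, $\sigma_1\in\Sigma[x(I_1)]_{2k+2}$, $\psi_1\in\mathbb R[x(I_1)]_{4k+1}$, $\sigma_2\in\Sigma[x(I_2)]_{2k+2}$, $\sigma_3\in\Sigma[x(I_2)]_{4k+3}$ such that $$f+\varepsilon(\theta_1^2+\theta_2^2)=\frac{\sigma_1+\psi_1g_1}{\Theta_1^k}+\frac{\sigma_2+\sigma_3g_3}{\Theta_2^k}.$$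
   Context: For $T\subseteq\{1,\dots,n\}$, $x(T)=(x_i)_{i\in T}$; $\mathbb R[x(T)]$ is the ring of polynomials in $x(T)$ and $\mathbb R[x(T)]_t$ its elements of degree at most $t$; $\Sigma[x(T)]$ is the set of sums of squares of polynomials in $x(T)$ and $\Sigma[x(T)]_t$ the sums of squares of elements of $\mathbb R[x(T)]_t$. *)

theory Defs
  imports Complex_Main
begin

text \<open>Points of R^n are represented as functions x :: nat => real; only the
coordinates x 1, ..., x n matter. A real polynomial in the variables x(T) is
represented by its polynomial function (over the infinite field R, polynomials
and polynomial functions correspond bijectively).\<close>

definition mono_exps :: "nat set \<Rightarrow> nat \<Rightarrow> (nat \<Rightarrow> nat) set" where
  "mono_exps T t = {\<alpha>. (\<forall>i. i \<notin> T \<longrightarrow> \<alpha> i = 0) \<and> sum \<alpha> T \<le> t}"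

definition poly_deg :: "nat set \<Rightarrow> nat \<Rightarrow> ((nat \<Rightarrow> real) \<Rightarrow> real) set" where
  "poly_deg T t = {p. \<exists>c :: (nat \<Rightarrow> nat) \<Rightarrow> real.
      \<forall>x. p x = (\<Sum>\<alpha>\<in>mono_exps T t. c \<alpha> * (\<Prod>i\<in>T. x i ^ \<alpha> i))}"

definition poly_in :: "nat set \<Rightarrow> ((nat \<Rightarrow> real) \<Rightarrow> real) set" where
  "poly_in T = (\<Union>t. poly_deg T t)"

definition sos_deg :: "nat set \<Rightarrow> nat \<Rightarrow> ((nat \<Rightarrow> real) \<Rightarrow> real) set" where
  "sos_deg T t = {p. \<exists>qs. (\<forall>q\<in>set qs. q \<in> poly_deg T t) \<and>
      (\<forall>x. p x = (\<Sum>q\<leftarrow>qs. (q x)\<^sup>2))}"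

definition sos_in :: "nat set \<Rightarrow> ((nat \<Rightarrow> real) \<Rightarrow> real) set" where
  "sos_in T = {p. \<exists>qs. (\<forall>q\<in>set qs. q \<in> poly_in T) \<and>
      (\<forall>x. p x = (\<Sum>q\<leftarrow>qs. (q x)\<^sup>2))}"

definition ex_f :: "(nat \<Rightarrow> real) \<Rightarrow> real" where
  "ex_f x = x 1 * x 2 + (x 2)\<^sup>2 * x 3"
definition ex_g1 :: "(nat \<Rightarrow> real) \<Rightarrow> real" where "ex_g1 x = (x 2) ^ 3"
definition ex_g2 :: "(nat \<Rightarrow> real) \<Rightarrow> real" where "ex_g2 x = - ((x 2) ^ 3)"
definition ex_g3 :: "(nat \<Rightarrow> real) \<Rightarrow> real" where "ex_g3 x = x 3"
definition ex_theta1 :: "(nat \<Rightarrow> real) \<Rightarrow> real" where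
  "ex_theta1 x = 1 + (x 1)\<^sup>2 + (x 2)\<^sup>2"
definition ex_theta2 :: "(nat \<Rightarrow> real) \<Rightarrow> real" where
  "ex_theta2 x = 1 + (x 2)\<^sup>2 + (x 3)\<^sup>2"
definition ex_Theta1 :: "(nat \<Rightarrow> real) \<Rightarrow> real" where
  "ex_Theta1 x = ex_theta1 x * (1 + (x 2)\<^sup>2)"
definition ex_Theta2 :: "(nat \<Rightarrow> real) \<Rightarrow> real" where
  "ex_Theta2 x = ex_theta2 x * (1 + (x 2)\<^sup>2)"

end

theory Submission
  imports Defs
begin

lemma mono_exps_finite: "finite T \<Longrightarrow> finite (mono_exps T t)"
proof -
  assume fT: "finite T"
  have "mono_exps T t \<subseteq> {f. \<forall>x. (x \<in> T \<longrightarrow> f x \<in> {..t}) \<and> (x \<notin> T \<longrightarrow> f x = 0)}"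
  proof
    fix \<alpha> assume a: "\<alpha> \<in> mono_exps T t"
    have "\<alpha> i \<le> t" if "i \<in> T" for i
    proof -
      have "\<alpha> i \<le> sum \<alpha> T" by (intro member_le_sum) (use fT that in auto)
      thus ?thesis using a unfolding mono_exps_def by auto
    qed
    thus "\<alpha> \<in> {f. \<forall>x. (x \<in> T \<longrightarrow> f x \<in> {..t}) \<and> (x \<notin> T \<longrightarrow> f x = 0)}"
      using a unfolding mono_exps_def by auto
  qed
  moreover have "finite {f. \<forall>x. (x \<in> T \<longrightarrow> f x \<in> {..t}) \<and> (x \<notin> T \<longrightarrow> (f x::nat) = 0)}"
    by (rule finite_set_of_finite_funs) (use fT in auto)
  ultimately show ?thesis by (rule finite_subset)
qed

lemma poly_deg_mono:
  assumes "finite T" "\<beta> \<in> mono_exps T t"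
  shows "(\<lambda>x. \<Prod>i\<in>T. x i ^ \<beta> i) \<in> poly_deg T t"
proof -
  have "\<forall>x::nat\<Rightarrow>real. (\<Prod>i\<in>T. x i ^ \<beta> i) =
     (\<Sum>\<alpha>\<in>mono_exps T t. (if \<alpha> = \<beta> then 1 else 0) * (\<Prod>i\<in>T. x i ^ \<alpha> i))"
  proof (intro allI)
    fix x :: "nat \<Rightarrow> real"
    have "(\<Sum>\<alpha>\<in>mono_exps T t. (if \<alpha> = \<beta> then 1 else 0) * (\<Prod>i\<in>T. x i ^ \<alpha> i))
       = (\<Sum>\<alpha>\<in>mono_exps T t. if \<alpha> = \<beta> then (\<Prod>i\<in>T. x i ^ \<alpha> i) else 0)"
      by (rule sum.cong) auto
    also have "\<dots> = (\<Prod>i\<in>T. x i ^ \<beta> i)"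
      using mono_exps_finite[OF assms(1), of t] assms(2) by (simp add: sum.delta)
    finally show "(\<Prod>i\<in>T. x i ^ \<beta> i) =
     (\<Sum>\<alpha>\<in>mono_exps T t. (if \<alpha> = \<beta> then 1 else 0) * (\<Prod>i\<in>T. x i ^ \<alpha> i))" by simp
  qed
  thus ?thesis unfolding poly_deg_def mem_Collect_eq by (rule exI[of _ "\<lambda>\<alpha>. if \<alpha> = \<beta> then 1 else 0"])
qed

lemma poly_deg_add:
  assumes "p \<in> poly_deg T t" "q \<in> poly_deg T t"
  shows "(\<lambda>x. p x + q x) \<in> poly_deg T t"
proof -
  obtain c d where c: "\<forall>x. p x = (\<Sum>\<alpha>\<in>mono_exps T t. c \<alpha> * (\<Prod>i\<in>T. x i ^ \<alpha> i))"
    and d: "\<forall>x. q x = (\<Sum>\<alpha>\<in>mono_exps T t. d \<alpha> * (\<Prod>i\<in>T. x i ^ \<alpha> i))"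
    using assms unfolding poly_deg_def by blast
  have "\<forall>x. p x + q x = (\<Sum>\<alpha>\<in>mono_exps T t. (c \<alpha> + d \<alpha>) * (\<Prod>i\<in>T. x i ^ \<alpha> i))"
    using c d by (simp add: distrib_right sum.distrib)
  thus ?thesis unfolding poly_deg_def mem_Collect_eq by (rule exI[of _ "\<lambda>\<alpha>. c \<alpha> + d \<alpha>"])
qed

lemma poly_deg_smult:
  assumes "p \<in> poly_deg T t"
  shows "(\<lambda>x. a * p x) \<in> poly_deg T t"
proof -
  obtain c where c: "\<forall>x. p x = (\<Sum>\<alpha>\<in>mono_exps T t. c \<alpha> * (\<Prod>i\<in>T. x i ^ \<alpha> i))"
    using assms unfolding poly_deg_def by blast
  have "\<forall>x. a * p x = (\<Sum>\<alpha>\<in>mono_exps T t. (a * c \<alpha>) * (\<Prod>i\<in>T. x i ^ \<alpha> i))"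
    using c by (simp add: sum_distrib_left mult.assoc)
  thus ?thesis unfolding poly_deg_def mem_Collect_eq by (rule exI[of _ "\<lambda>\<alpha>. a * c \<alpha>"])
qed

lemma poly_deg_var_pow:
  assumes "finite T" "j \<in> T" "n \<le> t"
  shows "(\<lambda>x. x j ^ n) \<in> poly_deg T t"
proof -
  let ?\<beta> = "\<lambda>i. if i = j then n else 0"
  have "?\<beta> \<in> mono_exps T t"
    unfolding mono_exps_def using assms by (auto simp: sum.delta)
  from poly_deg_mono[OF assms(1) this]
  have "(\<lambda>x. \<Prod>i\<in>T. x i ^ ?\<beta> i) \<in> poly_deg T t" .
  moreover have "(\<lambda>x::nat\<Rightarrow>real. \<Prod>i\<in>T. x i ^ ?\<beta> i) = (\<lambda>x. x j ^ n)"
  proof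
    fix x :: "nat \<Rightarrow> real"
    have "(\<Prod>i\<in>T. x i ^ ?\<beta> i) = (\<Prod>i\<in>T. if i = j then x i ^ n else 1)"
      by (rule prod.cong) auto
    also have "\<dots> = x j ^ n" using assms by (simp add: prod.delta)
    finally show "(\<Prod>i\<in>T. x i ^ ?\<beta> i) = x j ^ n" .
  qed
  ultimately show ?thesis by simp
qed

lemma poly_deg_var:
  assumes "finite T" "j \<in> T" "1 \<le> t"
  shows "(\<lambda>x. x j) \<in> poly_deg T t"
  using poly_deg_var_pow[OF assms] by simp

lemma poly_deg_const:
  assumes "finite T" "T \<noteq> {}"
  shows "(\<lambda>x. a) \<in> poly_deg T t"
proof -
  obtain j where "j \<in> T" using assms by auto
  from poly_deg_smult[OF poly_deg_var_pow[OF assms(1) this, of 0 t], of a]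
  show ?thesis by simp
qed

lemma sos_in_nonneg: "\<sigma> \<in> sos_in T \<Longrightarrow> 0 \<le> \<sigma> x"
  unfolding sos_in_def by (auto intro!: sum_list_nonneg)

definition pt :: "real \<Rightarrow> nat \<Rightarrow> real" where
  "pt b = (\<lambda>i. if i = 2 then b else if i = 1 then 1 else 0)"

lemma pt_cont: "continuous_on UNIV (\<lambda>b. pt b i)"
  unfolding pt_def by (cases "i = 2"; cases "i = 1") (auto intro: continuous_intros)

lemma part1:
  "\<not> (\<exists>\<sigma>1 \<psi>1 \<sigma>2 \<sigma>3.
            \<sigma>1 \<in> sos_in {1,2} \<and> \<psi>1 \<in> poly_in {1,2} \<and>
            \<sigma>2 \<in> sos_in {2,3} \<and> \<sigma>3 \<in> sos_in {2,3} \<and>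
            (\<forall>x. ex_f x = \<sigma>1 x + \<psi>1 x * ex_g1 x + \<sigma>2 x + \<sigma>3 x * ex_g3 x))"
proof
  assume "\<exists>\<sigma>1 \<psi>1 \<sigma>2 \<sigma>3.
            \<sigma>1 \<in> sos_in {1,2} \<and> \<psi>1 \<in> poly_in {1,2} \<and>
            \<sigma>2 \<in> sos_in {2,3} \<and> \<sigma>3 \<in> sos_in {2,3} \<and>
            (\<forall>x. ex_f x = \<sigma>1 x + \<psi>1 x * ex_g1 x + \<sigma>2 x + \<sigma>3 x * ex_g3 x)"
  then obtain \<sigma>1 \<psi>1 \<sigma>2 \<sigma>3 where s1: "\<sigma>1 \<in> sos_in {1,2}" and p1: "\<psi>1 \<in> poly_in {1,2}"
    and s2: "\<sigma>2 \<in> sos_in {2,3}" and eq: "\<forall>x. ex_f x = \<sigma>1 x + \<psi>1 x * ex_g1 x + \<sigma>2 x + \<sigma>3 x * ex_g3 x"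
    by blast
  obtain t c where c: "\<forall>x. \<psi>1 x = (\<Sum>\<alpha>\<in>mono_exps {1,2} t. c \<alpha> * (\<Prod>i\<in>{1,2}. x i ^ \<alpha> i))"
    using p1 unfolding poly_in_def poly_deg_def by blast
  define g where "g = (\<lambda>b. \<psi>1 (pt b) * b^2)"
  have gc: "continuous_on UNIV g"
    unfolding g_def c[rule_format]
    by (intro continuous_intros pt_cont)
  hence "isCont g 0" by (simp add: continuous_on_eq_continuous_at)
  hence "g \<midarrow>0\<rightarrow> g 0" by (simp add: isCont_def)
  moreover have "g 0 = 0" by (simp add: g_def)
  ultimately obtain s where s: "s > 0" and sD: "\<forall>x. x \<noteq> 0 \<and> norm (x - 0) < s \<longrightarrow> norm (g x - 0) < 1"
    using LIM_D[of g 0 0 1] by auto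
  define b where "b = - s / 2"
  have b: "b < 0" "b \<noteq> 0" "norm (b - 0) < s" using s by (auto simp: b_def)
  have "\<bar>b\<bar> < s" using s by (simp add: b_def)
  hence "norm (g b - 0) < 1" using sD b by blast
  hence gb: "g b < 1" by simp
  have "ex_f (pt b) = \<sigma>1 (pt b) + \<psi>1 (pt b) * ex_g1 (pt b) + \<sigma>2 (pt b) + \<sigma>3 (pt b) * ex_g3 (pt b)"
    using eq by blast
  hence e: "b = \<sigma>1 (pt b) + g b * b + \<sigma>2 (pt b)"
    by (simp add: ex_f_def ex_g1_def ex_g3_def pt_def g_def power3_eq_cube power2_eq_square mult.assoc)
  have "0 \<le> \<sigma>1 (pt b)" "0 \<le> \<sigma>2 (pt b)" using sos_in_nonneg s1 s2 by auto
  moreover have "g b * b > 1 * b" using gb b by (intro mult_strict_right_mono_neg) auto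
  ultimately show False using e by linarith
qed


lemma part2:
  fixes e :: real
  assumes e: "e > 0"
  shows "\<exists>k::nat. \<exists>\<sigma>1 \<psi>1 \<sigma>2 \<sigma>3.
            \<sigma>1 \<in> sos_deg {1,2} (2*k+2) \<and> \<psi>1 \<in> poly_deg {1,2} (4*k+1) \<and>
            \<sigma>2 \<in> sos_deg {2,3} (2*k+2) \<and> \<sigma>3 \<in> sos_deg {2,3} (4*k+3) \<and>
            (\<forall>x. ex_f x + e * ((ex_theta1 x)\<^sup>2 + (ex_theta2 x)\<^sup>2) =
                 (\<sigma>1 x + \<psi>1 x * ex_g1 x) / (ex_Theta1 x) ^ k
               + (\<sigma>2 x + \<sigma>3 x * ex_g3 x) / (ex_Theta2 x) ^ k)"
proof -
  define s where "s = sqrt e"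
  define w where "w = sqrt (2*e)"
  have s: "s > 0" "s^2 = e" using e by (auto simp: s_def)
  have w: "w > 0" "w^2 = 2*e" using e by (auto simp: w_def)
  define r where "r = (2*e - 1/(8*e)) / (2*s)"
  define q1 where "q1 = (\<lambda>x::nat\<Rightarrow>real. s + r * x 2 ^ 2)"
  define q2 where "q2 = (\<lambda>x::nat\<Rightarrow>real. w * x 1 + (1/(2*w)) * x 2)"
  define q3 where "q3 = (\<lambda>x::nat\<Rightarrow>real. s * x 1 ^ 2 + s * x 2 ^ 2)"
  define q4 where "q4 = (\<lambda>x::nat\<Rightarrow>real. s + s * x 2 ^ 2 + s * x 3 ^ 2)"
  define q5 where "q5 = (\<lambda>x::nat\<Rightarrow>real. x 2)"
  define \<sigma>1 where "\<sigma>1 = (\<lambda>x. (q1 x)^2 + (q2 x)^2 + (q3 x)^2)"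
  define nr where "nr = - (r^2)"
  define \<psi>1 where "\<psi>1 = (\<lambda>x::nat\<Rightarrow>real. nr * x 2)"
  define \<sigma>2 where "\<sigma>2 = (\<lambda>x. (q4 x)^2)"
  define \<sigma>3 where "\<sigma>3 = (\<lambda>x. (q5 x)^2)"
  have fin: "finite {1::nat,2}" "finite {2::nat,3}" "{1::nat,2} \<noteq> {}" "{2::nat,3} \<noteq> {}" by auto
  have "q1 \<in> poly_deg {1,2} 2" unfolding q1_def
    by (intro poly_deg_add poly_deg_smult poly_deg_const poly_deg_var_pow fin) auto
  moreover have "q2 \<in> poly_deg {1,2} 2" unfolding q2_def
    by (intro poly_deg_add poly_deg_smult poly_deg_var fin) auto
  moreover have "q3 \<in> poly_deg {1,2} 2" unfolding q3_def
    by (intro poly_deg_add poly_deg_smult poly_deg_var_pow fin) auto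
  ultimately have S1: "\<sigma>1 \<in> sos_deg {1,2} 2"
    unfolding sos_deg_def \<sigma>1_def mem_Collect_eq by (intro exI[of _ "[q1,q2,q3]"]) auto
  have "q4 \<in> poly_deg {2,3} 2" unfolding q4_def
    by (intro poly_deg_add poly_deg_smult poly_deg_const poly_deg_var_pow fin) auto
  hence S2: "\<sigma>2 \<in> sos_deg {2,3} 2"
    unfolding sos_deg_def \<sigma>2_def mem_Collect_eq by (intro exI[of _ "[q4]"]) auto
  have "q5 \<in> poly_deg {2,3} 3" unfolding q5_def
    by (intro poly_deg_var fin) auto
  hence S3: "\<sigma>3 \<in> sos_deg {2,3} 3"
    unfolding sos_deg_def \<sigma>3_def mem_Collect_eq by (intro exI[of _ "[q5]"]) auto
  have P1: "\<psi>1 \<in> poly_deg {1,2} 1" unfolding \<psi>1_def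
    by (intro poly_deg_smult poly_deg_var fin) auto
  have ID: "ex_f x + e * ((ex_theta1 x)\<^sup>2 + (ex_theta2 x)\<^sup>2) =
                 (\<sigma>1 x + \<psi>1 x * ex_g1 x) / (ex_Theta1 x) ^ 0
               + (\<sigma>2 x + \<sigma>3 x * ex_g3 x) / (ex_Theta2 x) ^ 0" for x
  proof -
    have r2: "2 * s * r = 2*e - 1/(8*e)" using s unfolding r_def by simp
    have w2: "(1/(2*w))^2 = 1/(8*e)" using w by (simp add: power_divide power_mult_distrib)
    have ww: "2 * w * (1/(2*w)) = 1" using w by simp
    have A: "(q1 x)^2 = e + (2*e - 1/(8*e)) * (x 2)^2 + r^2 * (x 2)^4"
    proof -
      have "(q1 x)^2 = s^2 + (2*s*r) * (x 2)^2 + r^2 * (x 2)^4"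
        unfolding q1_def by (simp add: power2_eq_square power4_eq_xxxx algebra_simps)
      thus ?thesis using r2 s(2) by simp
    qed
    have B: "(q2 x)^2 = 2*e * (x 1)^2 + x 1 * x 2 + 1/(8*e) * (x 2)^2"
    proof -
      have "(q2 x)^2 = w^2 * (x 1)^2 + (2 * w * (1/(2*w))) * x 1 * x 2 + (1/(2*w))^2 * (x 2)^2"
      proof -
        have g: "(w*a + c*b)^2 = w^2*a^2 + (2*w*c)*a*b + c^2*b^2" for a b c :: real
          by (simp add: power2_eq_square algebra_simps)
        show ?thesis unfolding q2_def by (rule g)
      qed
      thus ?thesis using w(2) w2 ww by simp
    qed
    have C: "(q3 x)^2 = e * ((x 1)^2 + (x 2)^2)^2"
    proof -
      have "(q3 x)^2 = s^2 * ((x 1)^2 + (x 2)^2)^2"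
        unfolding q3_def by (simp only: power2_eq_square algebra_simps)
      thus ?thesis using s(2) by simp
    qed
    have D: "(q4 x)^2 = e * (1 + (x 2)^2 + (x 3)^2)^2"
    proof -
      have "(q4 x)^2 = s^2 * (1 + (x 2)^2 + (x 3)^2)^2"
        unfolding q4_def by (simp only: power2_eq_square algebra_simps)
      thus ?thesis using s(2) by simp
    qed
    show ?thesis
      unfolding ex_f_def ex_theta1_def ex_theta2_def ex_g1_def ex_g3_def \<sigma>1_def \<sigma>2_def \<sigma>3_def \<psi>1_def
        A B C D nr_def q5_def
      by (simp add: power2_eq_square power3_eq_cube power4_eq_xxxx algebra_simps)
  qed
  show ?thesis
    apply (rule exI[of _ 0])
    apply (rule exI[of _ \<sigma>1], rule exI[of _ \<psi>1], rule exI[of _ \<sigma>2], rule exI[of _ \<sigma>3])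
    unfolding mult_0_right add_0 power_0 div_by_1
    using S1 P1 S2 S3 ID by (simp only: mult_0_right add_0 power_0 div_by_1 add.assoc, blast)
qed

theorem mainTheorem11:
  shows "(\<not> (\<exists>\<sigma>1 \<psi>1 \<sigma>2 \<sigma>3.
            \<sigma>1 \<in> sos_in {1,2} \<and> \<psi>1 \<in> poly_in {1,2} \<and>
            \<sigma>2 \<in> sos_in {2,3} \<and> \<sigma>3 \<in> sos_in {2,3} \<and>
            (\<forall>x. ex_f x = \<sigma>1 x + \<psi>1 x * ex_g1 x + \<sigma>2 x + \<sigma>3 x * ex_g3 x)))
     \<and> (\<forall>\<epsilon>::real. \<epsilon> > 0 \<longrightarrow>
          (\<exists>k::nat. \<exists>\<sigma>1 \<psi>1 \<sigma>2 \<sigma>3.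
            \<sigma>1 \<in> sos_deg {1,2} (2*k+2) \<and> \<psi>1 \<in> poly_deg {1,2} (4*k+1) \<and>
            \<sigma>2 \<in> sos_deg {2,3} (2*k+2) \<and> \<sigma>3 \<in> sos_deg {2,3} (4*k+3) \<and>
            (\<forall>x. ex_f x + \<epsilon> * ((ex_theta1 x)\<^sup>2 + (ex_theta2 x)\<^sup>2) =
                 (\<sigma>1 x + \<psi>1 x * ex_g1 x) / (ex_Theta1 x) ^ k
               + (\<sigma>2 x + \<sigma>3 x * ex_g3 x) / (ex_Theta2 x) ^ k)))"
  using part1 part2 by blast

end
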